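(* Let $\alpha>0$ and $\varepsilon>0$. Let $X,Y$ be finite sets with $Y\ne\emptyset$, and let $A\in\mathbb{R}^{X\times Y}$ satisfy $\operatorname{Ldim}_\alpha(A)=d$ and $\max_{x,y}|A(x,y)|=M>0$. Then there exist a subset $S\subseteq Y$ with $$|S|\ge |Y|\left(\frac{\varepsilon}{\lceil 2M/\alpha\rceil}\right)^{d}$$ and a function $g:X\to[-M,M]$ such that for every $x\in X$, $$\Pr_{y\in S}\bigl[\,|A(x,y)-g(x)|\ge 2\alpha\,\bigr]\le\varepsilon,$$ where $y$ is uniform in $S$.
   Context: A weighted mistake tree of depth $d$ over a domain $X$ is a complete binary tree of depth $d$ in which each internal node $\nu$ is labelled by an element $x(\nu)\in X$ and a real number $w(\nu)$, and each internal node has a designated left child and right child. For $\alpha>0$, a matrix $A\in\mathbb{R}^{X\times Y}$ $\alpha$-shatters a weighted mistake tree if for every root-to-leaf path $(\nu_1,\dots,\nu_{d+1})$ there is a column $y\in Y$ such that for all $1\le i\le d$: if $\nu_{i+1}$ is the left child of $\nu_i$ then $A(x(\nu_i),y)\ge w(\nu_i)+\alpha/2$, and if $\nu_{i+1}$ is the right child of $\nu_i$ then $A(x(\nu_i),y)\le w(\nu_i)-\alpha/2$. The $\alpha$-weighted Littlestone dimension $\operatorname{Ldim}_\alpha(A)$ is the largest $d$ such that some weighted mistake tree of depth $d$ over $X$ is $\alpha$-shattered by $A$. *)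

theory Defs
  imports Complex_Main
begin

text \<open>A weighted mistake tree of depth d over X: internal nodes are addressed by
  the list of directions taken from the root (True = left child, False = right child);
  an address of length < d is an internal node, labelled by an element of X and a weight.\<close>

definition weighted_mistake_tree :: "'a set \<Rightarrow> nat \<Rightarrow> (bool list \<Rightarrow> 'a \<times> real) \<Rightarrow> bool" where
  "weighted_mistake_tree X d T \<longleftrightarrow> (\<forall>p. length p < d \<longrightarrow> fst (T p) \<in> X)"

definition shatters :: "real \<Rightarrow> 'b set \<Rightarrow> ('a \<Rightarrow> 'b \<Rightarrow> real) \<Rightarrow> nat \<Rightarrow> (bool list \<Rightarrow> 'a \<times> real) \<Rightarrow> bool" where
  "shatters \<alpha> Y A d T \<longleftrightarrow>
     (\<forall>b. length b = d \<longrightarrow>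
        (\<exists>y\<in>Y. \<forall>i<d.
           (b ! i \<longrightarrow> A (fst (T (take i b))) y \<ge> snd (T (take i b)) + \<alpha> / 2) \<and>
           (\<not> b ! i \<longrightarrow> A (fst (T (take i b))) y \<le> snd (T (take i b)) - \<alpha> / 2)))"

definition Ldim :: "real \<Rightarrow> 'a set \<Rightarrow> 'b set \<Rightarrow> ('a \<Rightarrow> 'b \<Rightarrow> real) \<Rightarrow> nat" where
  "Ldim \<alpha> X Y A = (GREATEST d. \<exists>T. weighted_mistake_tree X d T \<and> shatters \<alpha> Y A d T)"

end

theory Submission
  imports Defs
begin

definition noshat :: "real \<Rightarrow> 'a set \<Rightarrow> 'b set \<Rightarrow> ('a \<Rightarrow> 'b \<Rightarrow> real) \<Rightarrow> nat \<Rightarrow> bool" where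
  "noshat \<alpha> X Y A n \<longleftrightarrow> \<not> (\<exists>T. weighted_mistake_tree X n T \<and> shatters \<alpha> Y A n T)"

lemma noshat_mono:
  assumes "Y1 \<subseteq> Y2" "noshat \<alpha> X Y2 A n" shows "noshat \<alpha> X Y1 A n"
proof -
  have "shatters \<alpha> Y1 A n T \<Longrightarrow> shatters \<alpha> Y2 A n T" for T
    using assms(1) unfolding shatters_def by (metis (no_types, lifting) subsetD)
  then show ?thesis using assms(2) unfolding noshat_def by blast
qed

lemma noshat_empty: "noshat \<alpha> X {} A n"
  unfolding noshat_def shatters_def
proof (intro notI, elim exE conjE)
  fix T assume "\<forall>b. length b = n \<longrightarrow> (\<exists>y\<in>{}. \<forall>i<n.
           (b ! i \<longrightarrow> A (fst (T (take i b))) y \<ge> snd (T (take i b)) + \<alpha> / 2) \<and>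
           (\<not> b ! i \<longrightarrow> A (fst (T (take i b))) y \<le> snd (T (take i b)) - \<alpha> / 2))"
  from this[rule_format, of "replicate n True"] show False by simp
qed

lemma shatters_Suc:
  assumes "weighted_mistake_tree X (Suc n) T" "shatters \<alpha> Y A (Suc n) T"
  shows "weighted_mistake_tree X n T \<and> shatters \<alpha> Y A n T"
proof
  show "weighted_mistake_tree X n T" using assms(1) unfolding weighted_mistake_tree_def by auto
  show "shatters \<alpha> Y A n T"
    unfolding shatters_def
  proof (intro allI impI)
    fix b :: "bool list" assume lb: "length b = n"
    then have "length (b @ [True]) = Suc n" by simp
    then obtain y where y: "y \<in> Y" and P: "\<forall>i<Suc n.
           ((b@[True]) ! i \<longrightarrow> A (fst (T (take i (b@[True])))) y \<ge> snd (T (take i (b@[True]))) + \<alpha> / 2) \<and>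
           (\<not> (b@[True]) ! i \<longrightarrow> A (fst (T (take i (b@[True])))) y \<le> snd (T (take i (b@[True]))) - \<alpha> / 2)"
      using assms(2) unfolding shatters_def by blast
    show "\<exists>y\<in>Y. \<forall>i<n.
           (b ! i \<longrightarrow> A (fst (T (take i b))) y \<ge> snd (T (take i b)) + \<alpha> / 2) \<and>
           (\<not> b ! i \<longrightarrow> A (fst (T (take i b))) y \<le> snd (T (take i b)) - \<alpha> / 2)"
    proof (intro bexI[OF _ y] allI impI)
      fix i assume i: "i < n"
      have "take i (b@[True]) = take i b" "(b@[True]) ! i = b ! i" using i lb by (auto simp: nth_append)
      then show "(b ! i \<longrightarrow> A (fst (T (take i b))) y \<ge> snd (T (take i b)) + \<alpha> / 2) \<and>
           (\<not> b ! i \<longrightarrow> A (fst (T (take i b))) y \<le> snd (T (take i b)) - \<alpha> / 2)"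
        using P i by (metis less_SucI)
    qed
  qed
qed

lemma noshat_Suc: "noshat \<alpha> X Y A n \<Longrightarrow> noshat \<alpha> X Y A (Suc n)"
  unfolding noshat_def using shatters_Suc by blast

lemma combine:
  assumes x: "x \<in> X"
    and U: "U \<subseteq> {y\<in>Y. A x y \<ge> w + \<alpha>/2}" and L: "L \<subseteq> {y\<in>Y. A x y \<le> w - \<alpha>/2}"
    and nU: "\<not> noshat \<alpha> X U A n" and nL: "\<not> noshat \<alpha> X L A n"
  shows "\<not> noshat \<alpha> X Y A (Suc n)"
proof -
  obtain T1 where T1: "weighted_mistake_tree X n T1" "shatters \<alpha> U A n T1"
    using nU unfolding noshat_def by blast
  obtain T2 where T2: "weighted_mistake_tree X n T2" "shatters \<alpha> L A n T2"
    using nL unfolding noshat_def by blast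
  define T where "T p = (case p of [] \<Rightarrow> (x, w) | h # q \<Rightarrow> if h then T1 q else T2 q)" for p
  have wT: "weighted_mistake_tree X (Suc n) T"
    unfolding weighted_mistake_tree_def
  proof (intro allI impI)
    fix p :: "bool list" assume "length p < Suc n"
    then show "fst (T p) \<in> X"
      using T1(1) T2(1) x unfolding weighted_mistake_tree_def T_def
      by (cases p) auto
  qed
  have sT: "shatters \<alpha> Y A (Suc n) T"
    unfolding shatters_def
  proof (intro allI impI)
    fix b :: "bool list" assume lb: "length b = Suc n"
    then obtain h b' where b: "b = h # b'" and lb': "length b' = n" by (cases b) auto
    show "\<exists>y\<in>Y. \<forall>i<Suc n.
           (b ! i \<longrightarrow> A (fst (T (take i b))) y \<ge> snd (T (take i b)) + \<alpha> / 2) \<and>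
           (\<not> b ! i \<longrightarrow> A (fst (T (take i b))) y \<le> snd (T (take i b)) - \<alpha> / 2)"
    proof (cases h)
      case True
      obtain y where y: "y \<in> U" and P: "\<forall>i<n.
           (b' ! i \<longrightarrow> A (fst (T1 (take i b'))) y \<ge> snd (T1 (take i b')) + \<alpha> / 2) \<and>
           (\<not> b' ! i \<longrightarrow> A (fst (T1 (take i b'))) y \<le> snd (T1 (take i b')) - \<alpha> / 2)"
        using T1(2) lb' unfolding shatters_def by blast
      show ?thesis
      proof (intro bexI allI impI)
        show "y \<in> Y" using y U by auto
        fix i assume i: "i < Suc n"
        show "(b ! i \<longrightarrow> A (fst (T (take i b))) y \<ge> snd (T (take i b)) + \<alpha> / 2) \<and>
           (\<not> b ! i \<longrightarrow> A (fst (T (take i b))) y \<le> snd (T (take i b)) - \<alpha> / 2)"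
        proof (cases i)
          case 0
          then show ?thesis using y U True b by (auto simp: T_def)
        next
          case (Suc j)
          then show ?thesis using P i True b by (auto simp: T_def)
        qed
      qed
    next
      case False
      obtain y where y: "y \<in> L" and P: "\<forall>i<n.
           (b' ! i \<longrightarrow> A (fst (T2 (take i b'))) y \<ge> snd (T2 (take i b')) + \<alpha> / 2) \<and>
           (\<not> b' ! i \<longrightarrow> A (fst (T2 (take i b'))) y \<le> snd (T2 (take i b')) - \<alpha> / 2)"
        using T2(2) lb' unfolding shatters_def by blast
      show ?thesis
      proof (intro bexI allI impI)
        show "y \<in> Y" using y L by auto
        fix i assume i: "i < Suc n"
        show "(b ! i \<longrightarrow> A (fst (T (take i b))) y \<ge> snd (T (take i b)) + \<alpha> / 2) \<and>
           (\<not> b ! i \<longrightarrow> A (fst (T (take i b))) y \<le> snd (T (take i b)) - \<alpha> / 2)"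
        proof (cases i)
          case 0
          then show ?thesis using y L False b by (auto simp: T_def)
        next
          case (Suc j)
          then show ?thesis using P i False b by (auto simp: T_def)
        qed
      qed
    qed
  qed
  show ?thesis using wT sT unfolding noshat_def by blast
qed

lemma first_diff:
  "length b = length b' \<Longrightarrow> b \<noteq> b' \<Longrightarrow> \<exists>i<length b. take i b = take i b' \<and> b!i \<noteq> b'!i"
proof (induction b arbitrary: b')
  case Nil then show ?case by simp
next
  case (Cons h t)
  then obtain h' t' where b': "b' = h' # t'" by (cases b') auto
  show ?case
  proof (cases "h = h'")
    case True
    then have "t \<noteq> t'" "length t = length t'" using Cons.prems b' by auto
    then obtain i where "i < length t" "take i t = take i t'" "t!i \<noteq> t'!i" using Cons.IH by blast
    then show ?thesis using True b' by (intro exI[of _ "Suc i"]) auto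
  next
    case False
    then show ?thesis using b' by (intro exI[of _ 0]) auto
  qed
qed

lemma shatters_bound:
  assumes "\<alpha> > 0" "finite Y" "shatters \<alpha> Y A d T"
  shows "d < card Y"
proof -
  define P where "P b y \<longleftrightarrow> (\<forall>i<d.
           (b ! i \<longrightarrow> A (fst (T (take i b))) y \<ge> snd (T (take i b)) + \<alpha> / 2) \<and>
           (\<not> b ! i \<longrightarrow> A (fst (T (take i b))) y \<le> snd (T (take i b)) - \<alpha> / 2))" for b y
  define f where "f b = (SOME y. y \<in> Y \<and> P b y)" for b
  define B where "B = {b :: bool list. set b \<subseteq> UNIV \<and> length b = d}"
  have fB: "\<And>b. b \<in> B \<Longrightarrow> f b \<in> Y \<and> P b (f b)"
  proof -
    fix b assume "b \<in> B"
    then have "length b = d" unfolding B_def by simp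
    then have "\<exists>y. y \<in> Y \<and> P b y" using assms(3) unfolding shatters_def P_def by blast
    then show "f b \<in> Y \<and> P b (f b)" unfolding f_def by (rule someI_ex)
  qed
  have "inj_on f B"
  proof (rule inj_onI)
    fix b b' assume b: "b \<in> B" and b': "b' \<in> B" and eq: "f b = f b'"
    show "b = b'"
    proof (rule ccontr)
      assume ne: "b \<noteq> b'"
      have l: "length b = d" "length b' = d" using b b' by (auto simp: B_def)
      then obtain i where i: "i < d" "take i b = take i b'" "b!i \<noteq> b'!i"
        using first_diff[of b b'] ne by auto
      have "P b (f b)" "P b' (f b')" using fB b b' by auto
      then have h1: "(b ! i \<longrightarrow> A (fst (T (take i b))) (f b) \<ge> snd (T (take i b)) + \<alpha> / 2) \<and>
           (\<not> b ! i \<longrightarrow> A (fst (T (take i b))) (f b) \<le> snd (T (take i b)) - \<alpha> / 2)"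
        and h2: "(b' ! i \<longrightarrow> A (fst (T (take i b))) (f b) \<ge> snd (T (take i b)) + \<alpha> / 2) \<and>
           (\<not> b' ! i \<longrightarrow> A (fst (T (take i b))) (f b) \<le> snd (T (take i b)) - \<alpha> / 2)"
        unfolding P_def using i(1) i(2) eq by auto
      show False
      proof (cases "b ! i")
        case True
        then have "\<not> b' ! i" using i(3) by simp
        then show False using True h1 h2 assms(1) by auto
      next
        case False
        then have "b' ! i" using i(3) by simp
        then show False using False h1 h2 assms(1) by auto
      qed
    qed
  qed
  then have "card B \<le> card Y" using fB assms(2) by (intro card_inj_on_le) auto
  moreover have "card B = 2 ^ d" unfolding B_def
    using card_lists_length_eq[of "UNIV :: bool set" d] by simp
  ultimately show ?thesis using less_exp[of d] by linarith
qed


lemma not_noshat0: "y \<in> Y \<Longrightarrow> \<not> noshat \<alpha> X Y A 0"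
  unfolding noshat_def weighted_mistake_tree_def shatters_def by auto

lemma main_claim:
  fixes c \<alpha> \<epsilon> M :: real and X :: "'a set" and Y :: "'b set" and A :: "'a \<Rightarrow> 'b \<Rightarrow> real"
  assumes a: "\<alpha> > 0" and e: "\<epsilon> > 0" and fY: "finite Y"
    and bound: "\<forall>x\<in>X. \<forall>y\<in>Y. \<bar>A x y\<bar> \<le> M" and M0: "M \<ge> 0"
    and c0: "c \<ge> 0" and c1: "c \<le> 1" and c2: "c \<le> \<epsilon> / 2"
  shows "Y' \<subseteq> Y \<Longrightarrow> noshat \<alpha> X Y' A (Suc k) \<Longrightarrow> \<exists>S g. S \<subseteq> Y'
    \<and> real (card S) \<ge> real (card Y') * c ^ k
    \<and> (\<forall>x\<in>X. g x \<in> {-M..M})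
    \<and> (\<forall>x\<in>X. real (card {y\<in>S. \<bar>A x y - g x\<bar> \<ge> 2 * \<alpha>}) / real (card S) \<le> \<epsilon>)"
proof (induction k arbitrary: Y')
  case 0
  show ?case
  proof (cases "Y' = {}")
    case True
    show ?thesis
      by (rule exI[of _ "{}"], rule exI[of _ "\<lambda>_. 0"]) (use True M0 e in auto)
  next
    case False
    then obtain y0 where y0: "y0 \<in> Y'" by blast
    have close: "A x y1 - A x y2 < \<alpha>" if x: "x \<in> X" and y1: "y1 \<in> Y'" and y2: "y2 \<in> Y'" for x y1 y2
    proof (rule ccontr)
      assume "\<not> A x y1 - A x y2 < \<alpha>"
      define w where "w = (A x y1 + A x y2) / 2"
      have "\<not> noshat \<alpha> X Y' A (Suc 0)"
        by (rule combine[OF x, where U="{y1}" and Y=Y' and A=A and w=w and \<alpha>=\<alpha> and L="{y2}"])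
          (use y1 y2 \<open>\<not> A x y1 - A x y2 < \<alpha>\<close> not_noshat0[of y1 "{y1}" \<alpha> X A] not_noshat0[of y2 "{y2}" \<alpha> X A] in \<open>auto simp: w_def field_simps\<close>)
      then show False using "0.prems" by simp
    qed
    show ?thesis
    proof (intro exI[of _ Y'] exI[of _ "\<lambda>x. A x y0"] conjI ballI)
      show "Y' \<subseteq> Y'" by simp
      show "real (card Y') * c ^ 0 \<le> real (card Y')" by simp
      fix x assume x: "x \<in> X"
      show "A x y0 \<in> {-M..M}" using bound x y0 "0.prems"(1) by fastforce
      have E: "{y\<in>Y'. \<bar>A x y - A x y0\<bar> \<ge> 2 * \<alpha>} = {}"
        using close[OF x _ y0] close[OF x y0] a by fastforce
      then show "real (card {y\<in>Y'. \<bar>A x y - A x y0\<bar> \<ge> 2 * \<alpha>}) / real (card Y') \<le> \<epsilon>"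
        unfolding E using e by simp
    qed
  qed
next
  case (Suc k)
  have fY': "finite Y'" using Suc.prems(1) fY finite_subset by blast
  show ?case
  proof (cases "\<forall>x\<in>X. \<exists>v\<in>{-M..M}. real (card {y\<in>Y'. \<bar>A x y - v\<bar> \<ge> 2 * \<alpha>}) / real (card Y') \<le> \<epsilon>")
    case True
    then have "\<forall>x\<in>X. \<exists>v. v \<in> {-M..M} \<and> real (card {y\<in>Y'. \<bar>A x y - v\<bar> \<ge> 2 * \<alpha>}) / real (card Y') \<le> \<epsilon>"
      by blast
    then obtain g where g: "\<forall>x\<in>X. g x \<in> {-M..M} \<and> real (card {y\<in>Y'. \<bar>A x y - g x\<bar> \<ge> 2 * \<alpha>}) / real (card Y') \<le> \<epsilon>"
      by (rule bchoice[elim_format]) blast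
    have "c ^ Suc k \<le> 1" using c0 c1 by (rule power_le_one)
    then have "real (card Y') * c ^ Suc k \<le> real (card Y')"
      by (simp add: mult_left_le)
    then show ?thesis using g by (intro exI[of _ Y'] exI[of _ g]) auto
  next
    case False
    then obtain x where x: "x \<in> X" and bad: "\<forall>v\<in>{-M..M}. \<not> real (card {y\<in>Y'. \<bar>A x y - v\<bar> \<ge> 2 * \<alpha>}) / real (card Y') \<le> \<epsilon>"
      by blast
    show ?thesis
    proof (cases "noshat \<alpha> X Y' A (Suc k)")
      case True
      obtain S g where S: "S \<subseteq> Y'" "real (card S) \<ge> real (card Y') * c ^ k"
        "\<forall>x\<in>X. g x \<in> {-M..M}"
        "\<forall>x\<in>X. real (card {y\<in>S. \<bar>A x y - g x\<bar> \<ge> 2 * \<alpha>}) / real (card S) \<le> \<epsilon>"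
        using Suc.IH[OF Suc.prems(1) True] by blast
      have "c ^ Suc k \<le> c ^ k" using c0 c1 by (simp add: mult_left_le_one_le)
      then have "real (card Y') * c ^ Suc k \<le> real (card Y') * c ^ k"
        by (simp add: mult_left_mono)
      then show ?thesis using S by (intro exI[of _ S] exI[of _ g]) auto
    next
      case nY': False
      define U where "U w = {y\<in>Y'. A x y \<ge> w + \<alpha>/2}" for w
      define L where "L w = {y\<in>Y'. A x y \<le> w - \<alpha>/2}" for w
      have comb: "noshat \<alpha> X (U w) A (Suc k) \<or> noshat \<alpha> X (L w) A (Suc k)" for w
        using combine[OF x, where U="U w" and Y=Y' and A=A and w=w and \<alpha>=\<alpha> and L="L w" and n="Suc k"] Suc.prems(2)
        unfolding U_def L_def by blast
      have Ab: "\<bar>A x y\<bar> \<le> M" if "y \<in> Y'" for y using bound x that Suc.prems(1) by blast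
      define G where "G = {w. noshat \<alpha> X (U w) A (Suc k)}"
      have Aup: "A x y \<le> M" and Alo: "- M \<le> A x y" if "y \<in> Y'" for y
        using Ab[OF that] by (simp_all add: abs_le_iff)
      have "U M = {}"
      proof -
        have "\<not> M + \<alpha>/2 \<le> A x y" if "y \<in> Y'" for y using Aup[OF that] a by linarith
        then show ?thesis unfolding U_def by blast
      qed
      then have MG: "M \<in> G" unfolding G_def by (simp add: noshat_empty)
      have lowG: "- M - \<alpha>/2 < w" if "w \<in> G" for w
      proof (rule ccontr)
        assume "\<not> - M - \<alpha>/2 < w"
        then have "w + \<alpha>/2 \<le> A x y" if "y \<in> Y'" for y using Alo[OF that] by linarith
        then have "U w = Y'" unfolding U_def by blast
        then show False using that nY' unfolding G_def by simp
      qed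
      have bG: "bdd_below G" using lowG by (intro bdd_belowI[of _ "- M - \<alpha>/2"]) (auto intro: less_imp_le)
      have Gne: "G \<noteq> {}" using MG by blast
      define ws where "ws = Inf G"
      have hi: "noshat \<alpha> X (U w) A (Suc k)" if "ws < w" for w
      proof -
        have "Inf G < w" using that unfolding ws_def .
        then have "\<exists>g\<in>G. g < w" by (simp add: cInf_less_iff[OF Gne bG])
        then obtain g where g: "g \<in> G" "g < w" by blast
        have "U w \<subseteq> U g"
        proof
          fix y assume "y \<in> U w"
          then have "y \<in> Y'" "w + \<alpha>/2 \<le> A x y" unfolding U_def by simp_all
          then show "y \<in> U g" using g(2) unfolding U_def by simp
        qed
        moreover have "noshat \<alpha> X (U g) A (Suc k)" using g(1) unfolding G_def by simp
        ultimately show ?thesis by (rule noshat_mono)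
      qed
      have lo: "noshat \<alpha> X (L w) A (Suc k)" if "w < ws" for w
      proof -
        have "w \<notin> G"
        proof
          assume "w \<in> G"
          then have "ws \<le> w" unfolding ws_def by (rule cInf_lower[OF _ bG])
          then show False using that by simp
        qed
        then show ?thesis using comb[of w] unfolding G_def by blast
      qed
      have ws1: "- M - \<alpha>/2 \<le> ws" unfolding ws_def
        by (rule cInf_greatest[OF Gne]) (rule less_imp_le[OF lowG])
      have ws2: "ws \<le> M" unfolding ws_def using cInf_lower[OF MG bG] .
      define v where "v = max (- M) ws"
      have v: "v \<in> {-M..M}" using ws2 M0 unfolding v_def by auto
      define F where "F = {y\<in>Y'. \<bar>A x y - v\<bar> \<ge> 2 * \<alpha>}"
      have FUL: "F \<subseteq> U (v + 3*\<alpha>/2) \<union> L (v - 3*\<alpha>/2)"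
        unfolding F_def U_def L_def by auto
      have nU: "noshat \<alpha> X (U (v + 3*\<alpha>/2)) A (Suc k)"
        by (rule hi) (use a in \<open>simp add: v_def\<close>)
      have nL: "noshat \<alpha> X (L (v - 3*\<alpha>/2)) A (Suc k)"
        by (rule lo) (use a ws1 in \<open>simp add: v_def\<close>)
      have Fbig: "real (card F) > \<epsilon> * real (card Y')"
      proof (cases "card Y' = 0")
        case True
        then show ?thesis using bad v e unfolding F_def by auto
      next
        case False
        have "\<not> real (card F) / real (card Y') \<le> \<epsilon>" using bad v unfolding F_def by blast
        then have "real (card F) / real (card Y') > \<epsilon>" by simp
        then show ?thesis using False by (simp add: pos_less_divide_eq mult.commute)
      qed
      have fUL: "finite (U w)" "finite (L w)" for w using fY' unfolding U_def L_def by auto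
      have "card F \<le> card (U (v + 3*\<alpha>/2) \<union> L (v - 3*\<alpha>/2))"
        using FUL fUL by (intro card_mono) auto
      also have "\<dots> \<le> card (U (v + 3*\<alpha>/2)) + card (L (v - 3*\<alpha>/2))" by (rule card_Un_le)
      finally have cUL: "real (card F) \<le> real (card (U (v + 3*\<alpha>/2))) + real (card (L (v - 3*\<alpha>/2)))"
        by linarith
      obtain Y'' where Y'': "Y'' \<subseteq> Y'" "noshat \<alpha> X Y'' A (Suc k)" "real (card Y'') \<ge> \<epsilon> * real (card Y') / 2"
      proof (cases "real (card (U (v + 3*\<alpha>/2))) \<ge> \<epsilon> * real (card Y') / 2")
        case True
        then show ?thesis using that[of "U (v + 3*\<alpha>/2)"] nU unfolding U_def by auto
      next
        case False
        then have "real (card (L (v - 3*\<alpha>/2))) \<ge> \<epsilon> * real (card Y') / 2" using cUL Fbig by linarith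
        then show ?thesis using that[of "L (v - 3*\<alpha>/2)"] nL unfolding L_def by auto
      qed
      obtain S g where S: "S \<subseteq> Y''" "real (card S) \<ge> real (card Y'') * c ^ k"
        "\<forall>x\<in>X. g x \<in> {-M..M}"
        "\<forall>x\<in>X. real (card {y\<in>S. \<bar>A x y - g x\<bar> \<ge> 2 * \<alpha>}) / real (card S) \<le> \<epsilon>"
        using Suc.IH[of Y''] Y''(1,2) Suc.prems(1) by blast
      have ck: "c ^ k \<ge> 0" using c0 by simp
      have "real (card Y') * c ^ Suc k = (c * real (card Y')) * c ^ k" by simp
      also have "\<dots> \<le> (\<epsilon> * real (card Y') / 2) * c ^ k"
        using mult_right_mono[OF c2, of "real (card Y')"] ck by (intro mult_right_mono) auto
      also have "\<dots> \<le> real (card Y'') * c ^ k"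
        using Y''(3) ck by (rule mult_right_mono)
      also have "\<dots> \<le> real (card S)" by (rule S(2))
      finally show ?thesis using S Y''(1) by (intro exI[of _ S] exI[of _ g]) auto
    qed
  qed
qed


theorem proposition3p1:
  fixes \<alpha> \<epsilon> M :: real and X :: "'a set" and Y :: "'b set"
    and A :: "'a \<Rightarrow> 'b \<Rightarrow> real" and d :: nat
  assumes "\<alpha> > 0" and "\<epsilon> > 0" and "\<epsilon> \<le> 1"
    and "finite X" and "finite Y" and "Y \<noteq> {}"
    and "Ldim \<alpha> X Y A = d"
    and "M = Max {\<bar>A x y\<bar> | x y. x \<in> X \<and> y \<in> Y}" and "M > 0"
  shows "\<exists>S g. S \<subseteq> Y
    \<and> real (card S) \<ge> real (card Y) * (\<epsilon> / real_of_int \<lceil>2 * M / \<alpha>\<rceil>) ^ d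
    \<and> (\<forall>x\<in>X. g x \<in> {-M..M})
    \<and> (\<forall>x\<in>X. real (card {y\<in>S. \<bar>A x y - g x\<bar> \<ge> 2 * \<alpha>}) / real (card S) \<le> \<epsilon>)"
proof -
  note a = assms(1) and e = assms(2) and e1 = assms(3) and fX = assms(4) and fY = assms(5)
  have fin: "finite {\<bar>A x y\<bar> | x y. x \<in> X \<and> y \<in> Y}"
  proof -
    have "{\<bar>A x y\<bar> | x y. x \<in> X \<and> y \<in> Y} = (\<lambda>(x,y). \<bar>A x y\<bar>) ` (X \<times> Y)" by auto
    then show ?thesis using fX fY by simp
  qed
  have bound: "\<forall>x\<in>X. \<forall>y\<in>Y. \<bar>A x y\<bar> \<le> M"
  proof (intro ballI)
    fix x y assume "x \<in> X" "y \<in> Y"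
    then have "\<bar>A x y\<bar> \<in> {\<bar>A x y\<bar> | x y. x \<in> X \<and> y \<in> Y}" by blast
    then show "\<bar>A x y\<bar> \<le> M" using Max_ge[OF fin] assms(8) by simp
  qed
  have ns: "noshat \<alpha> X Y A (Suc d)"
  proof (rule ccontr)
    assume "\<not> noshat \<alpha> X Y A (Suc d)"
    then have P: "\<exists>T. weighted_mistake_tree X (Suc d) T \<and> shatters \<alpha> Y A (Suc d) T"
      unfolding noshat_def by blast
    have "Suc d \<le> (GREATEST n. \<exists>T. weighted_mistake_tree X n T \<and> shatters \<alpha> Y A n T)"
    proof (rule Greatest_le_nat[of _ _ "card Y"])
      show "\<exists>T. weighted_mistake_tree X (Suc d) T \<and> shatters \<alpha> Y A (Suc d) T" by (rule P)
      show "y \<le> card Y" if "\<exists>T. weighted_mistake_tree X y T \<and> shatters \<alpha> Y A y T" for y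
        using shatters_bound[OF a fY] that less_imp_le by blast
    qed
    then show False using assms(7) unfolding Ldim_def by simp
  qed
  define K where "K = \<lceil>2 * M / \<alpha>\<rceil>"
  have pos: "2 * M / \<alpha> > 0" using a assms(9) by simp
  then have K1: "K \<ge> 1" unfolding K_def by linarith
  show ?thesis
  proof (cases "K \<le> 1")
    case True
    then have "2 * M / \<alpha> \<le> 1" unfolding K_def by linarith
    then have Ms: "M \<le> \<alpha> / 2" using a by (simp add: field_simps)
    have K: "real_of_int K = 1" using True K1 by simp
    have E: "{y\<in>Y. \<bar>A x y - 0\<bar> \<ge> 2 * \<alpha>} = {}" if "x \<in> X" for x
    proof -
      have "\<not> \<bar>A x y - 0\<bar> \<ge> 2 * \<alpha>" if "y \<in> Y" for y
        using bound \<open>x \<in> X\<close> that Ms a by fastforce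
      then show ?thesis by blast
    qed
    have "(\<epsilon> / real_of_int K) ^ d \<le> 1" unfolding K using e e1 by (simp add: power_le_one)
    then have "real (card Y) * (\<epsilon> / real_of_int K) ^ d \<le> real (card Y)" by (simp add: mult_left_le)
    moreover have "\<forall>x\<in>X. real (card {y\<in>Y. \<bar>A x y - 0\<bar> \<ge> 2 * \<alpha>}) / real (card Y) \<le> \<epsilon>"
    proof
      fix x assume "x \<in> X"
      show "real (card {y\<in>Y. \<bar>A x y - 0\<bar> \<ge> 2 * \<alpha>}) / real (card Y) \<le> \<epsilon>"
        unfolding E[OF \<open>x \<in> X\<close>] using e by simp
    qed
    moreover have "\<forall>x\<in>X. (0::real) \<in> {-M..M}" using assms(9) by simp
    ultimately show ?thesis
      unfolding K_def[symmetric]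
      by (intro exI[of _ Y] exI[of _ "\<lambda>_. 0"]) blast
  next
    case False
    then have K2: "real_of_int K \<ge> 2" by simp
    define c where "c = \<epsilon> / real_of_int K"
    have c0: "c \<ge> 0" unfolding c_def using e K2 by simp
    have c2: "c \<le> \<epsilon> / 2" unfolding c_def using divide_left_mono[of 2 "real_of_int K" \<epsilon>] e K2 by simp
    have c1: "c \<le> 1" using c2 e1 by simp
    obtain S g where S: "S \<subseteq> Y" "real (card S) \<ge> real (card Y) * c ^ d"
        "\<forall>x\<in>X. g x \<in> {-M..M}"
        "\<forall>x\<in>X. real (card {y\<in>S. \<bar>A x y - g x\<bar> \<ge> 2 * \<alpha>}) / real (card S) \<le> \<epsilon>"
      using main_claim[OF a e fY bound _ c0 c1 c2, of Y d] ns assms(9) by auto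
    show ?thesis using S unfolding c_def K_def by blast
  qed
qed

end
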